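(* Under the standing assumptions, $G$ does not contain a vertex $v$ of degree $8$ together with pairwise distinct neighbours $x,t,w,y,z,u,r$ of $v$ and distinct vertices $p,q\notin\{v,x,t,w,y,z,u,r\}$ such that $xt,tw,wy,ur\in E(G)$, $p$ is adjacent to both $y$ and $z$, $q$ is adjacent to both $z$ and $u$, and $d(t)=d(y)=d(z)=d(u)=3$.
   Context: Standing assumptions: A total $9$-coloring of a graph is an assignment of colors from $\{1,\dots,9\}$ to the vertices and edges such that adjacent vertices, edges sharing an endpoint, and a vertex and an incident edge receive different colors. A $4$-fan is the graph on six vertices $c,u_1,\dots,u_5$ with edges $cu_j$ ($1\le j\le5$) and $u_ju_{j+1}$ ($1\le j\le4$). $G$ is a minimal counterexample: $G$ is a simple planar graph with maximum degree $8$, containing no subgraph isomorphic to a $4$-fan, that has no total $9$-coloring, and such that every simple planar graph $H$ with maximum degree at most $8$, no subgraph isomorphic to a $4$-fan, and $|V(H)|+|E(H)|<|V(G)|+|E(G)|$ has a total $9$-coloring. $d(\cdot)$ denotes degree in $G$. *)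

theory Defs
  imports "HOL-Analysis.Analysis"
begin

definition simple_graph :: "'a set \<Rightarrow> 'a set set \<Rightarrow> bool" where
  "simple_graph V E \<longleftrightarrow> finite V \<and> (\<forall>e\<in>E. \<exists>x y. x \<in> V \<and> y \<in> V \<and> x \<noteq> y \<and> e = {x, y})"

definition adj :: "'a set set \<Rightarrow> 'a \<Rightarrow> 'a \<Rightarrow> bool" where
  "adj E x y \<longleftrightarrow> {x, y} \<in> E"

definition degree :: "'a set set \<Rightarrow> 'a \<Rightarrow> nat" where
  "degree E v = card {e \<in> E. v \<in> e}"

definition max_degree_le :: "'a set \<Rightarrow> 'a set set \<Rightarrow> nat \<Rightarrow> bool" where
  "max_degree_le V E k \<longleftrightarrow> (\<forall>v\<in>V. degree E v \<le> k)"

definition max_degree_eq :: "'a set \<Rightarrow> 'a set set \<Rightarrow> nat \<Rightarrow> bool" where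
  "max_degree_eq V E k \<longleftrightarrow> max_degree_le V E k \<and> (\<exists>v\<in>V. degree E v = k)"

definition planar_embedding ::
  "'a set \<Rightarrow> 'a set set \<Rightarrow> ('a \<Rightarrow> complex) \<Rightarrow> ('a set \<Rightarrow> real \<Rightarrow> complex) \<Rightarrow> bool" where
  "planar_embedding V E pos arcs \<longleftrightarrow>
     inj_on pos V \<and>
     (\<forall>e\<in>E. \<exists>x y. e = {x, y} \<and> arc (arcs e) \<and>
              pathstart (arcs e) = pos x \<and> pathfinish (arcs e) = pos y) \<and>
     (\<forall>e\<in>E. \<forall>v\<in>V. pos v \<in> path_image (arcs e) \<longrightarrow> v \<in> e) \<and>
     (\<forall>e\<in>E. \<forall>e'\<in>E. e \<noteq> e' \<longrightarrow>
        path_image (arcs e) \<inter> path_image (arcs e') \<subseteq> pos ` (e \<inter> e'))"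

definition planar :: "'a set \<Rightarrow> 'a set set \<Rightarrow> bool" where
  "planar V E \<longleftrightarrow> (\<exists>pos arcs. planar_embedding V E pos arcs)"

definition total_coloring ::
  "'a set \<Rightarrow> 'a set set \<Rightarrow> nat \<Rightarrow> ('a \<Rightarrow> nat) \<Rightarrow> ('a set \<Rightarrow> nat) \<Rightarrow> bool" where
  "total_coloring V E k f g \<longleftrightarrow>
     (\<forall>v\<in>V. f v \<in> {1..k}) \<and> (\<forall>e\<in>E. g e \<in> {1..k}) \<and>
     (\<forall>x\<in>V. \<forall>y\<in>V. {x, y} \<in> E \<longrightarrow> f x \<noteq> f y) \<and>
     (\<forall>e\<in>E. \<forall>e'\<in>E. e \<noteq> e' \<and> e \<inter> e' \<noteq> {} \<longrightarrow> g e \<noteq> g e') \<and>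
     (\<forall>v\<in>V. \<forall>e\<in>E. v \<in> e \<longrightarrow> f v \<noteq> g e)"

definition total_colorable :: "'a set \<Rightarrow> 'a set set \<Rightarrow> nat \<Rightarrow> bool" where
  "total_colorable V E k \<longleftrightarrow> (\<exists>f g. total_coloring V E k f g)"

definition has_4fan :: "'a set \<Rightarrow> 'a set set \<Rightarrow> bool" where
  "has_4fan V E \<longleftrightarrow> (\<exists>c u1 u2 u3 u4 u5.
     distinct [c, u1, u2, u3, u4, u5] \<and> set [c, u1, u2, u3, u4, u5] \<subseteq> V \<and>
     adj E c u1 \<and> adj E c u2 \<and> adj E c u3 \<and> adj E c u4 \<and> adj E c u5 \<and>
     adj E u1 u2 \<and> adj E u2 u3 \<and> adj E u3 u4 \<and> adj E u4 u5)"

text \<open>Smaller graphs H range over graphs with vertices in nat;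
  since total colourability, planarity etc. are isomorphism invariant and all graphs
  are finite, this covers all smaller graphs.\<close>
definition minimal_counterexample :: "'a set \<Rightarrow> 'a set set \<Rightarrow> bool" where
  "minimal_counterexample V E \<longleftrightarrow>
     simple_graph V E \<and> planar V E \<and> max_degree_eq V E 8 \<and> \<not> has_4fan V E \<and>
     \<not> total_colorable V E 9 \<and>
     (\<forall>(VH :: nat set) EH. simple_graph VH EH \<and> planar VH EH \<and> max_degree_le VH EH 8 \<and>
        \<not> has_4fan VH EH \<and> card VH + card EH < card V + card E \<longrightarrow> total_colorable VH EH 9)"

end

theory Submission
  imports Defs
begin

definition ok_ex :: "'a set \<Rightarrow> 'a set set \<Rightarrow> 'a set \<Rightarrow> ('a \<Rightarrow> nat) \<Rightarrow> ('a set \<Rightarrow> nat) \<Rightarrow> bool" where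
 "ok_ex V E U f g \<longleftrightarrow> (\<forall>v\<in>V-U. f v \<in> {1..9}) \<and> (\<forall>e\<in>E. g e \<in> {1..9}) \<and>
    (\<forall>x\<in>V-U. \<forall>y\<in>V-U. {x,y}\<in>E \<longrightarrow> f x \<noteq> f y) \<and>
    (\<forall>e\<in>E. \<forall>e'\<in>E. e\<noteq>e' \<and> e\<inter>e'\<noteq>{} \<longrightarrow> g e \<noteq> g e') \<and>
    (\<forall>v\<in>V-U. \<forall>e\<in>E. v\<in>e \<longrightarrow> f v \<noteq> g e)"

lemma ok_ex_empty: "ok_ex V E {} f g \<longleftrightarrow> total_coloring V E 9 f g"
  unfolding ok_ex_def total_coloring_def by auto

lemma fix_vertex:
  assumes sg: "simple_graph V E" and ok: "ok_ex V E (insert a U) f g" and aV: "a \<in> V"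
    and deg: "degree E a \<le> 4"
  shows "\<exists>f'. ok_ex V E U f' g"
proof -
  define N where "N = {b. {a,b} \<in> E}"
  define Ea where "Ea = {e\<in>E. a\<in>e}"
  have finV: "finite V" using sg by (simp add: simple_graph_def)
  have NV: "N \<subseteq> V"
  proof
    fix b assume "b \<in> N"
    then have "{a,b} \<in> E" by (simp add: N_def)
    then obtain x y where "x\<in>V" "y\<in>V" "{a,b} = {x,y}" using sg by (auto simp: simple_graph_def)
    then show "b \<in> V" by (auto simp: doubleton_eq_iff)
  qed
  have EPow: "E \<subseteq> Pow V" using sg by (auto simp: simple_graph_def)
  have finE: "finite E" using EPow finV by (meson finite_Pow_iff finite_subset)
  have finN: "finite N" using NV finV finite_subset by blast
  have finEa: "finite Ea" using finE by (simp add: Ea_def)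
  have "inj_on (\<lambda>b. {a,b}) N"
  proof (rule inj_onI)
    fix b c assume "b\<in>N" "c\<in>N" "{a,b} = {a,c}"
    then show "b = c" by (auto simp: doubleton_eq_iff)
  qed
  moreover have "(\<lambda>b. {a,b}) ` N \<subseteq> Ea" by (auto simp: N_def Ea_def)
  ultimately have "card N \<le> card Ea" using finEa by (metis card_inj_on_le)
  moreover have "card Ea \<le> 4" using deg by (simp add: degree_def Ea_def)
  ultimately have cF: "card (f ` N \<union> g ` Ea) \<le> 8"
  proof -
    assume h: "card N \<le> card Ea" "card Ea \<le> 4"
    have "card (f ` N \<union> g ` Ea) \<le> card (f ` N) + card (g ` Ea)" by (rule card_Un_le)
    also have "\<dots> \<le> card N + card Ea" using card_image_le finEa finN by (metis add_le_mono)
    finally show ?thesis using h by linarith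
  qed
  have "\<exists>c\<in>{1..9::nat}. c \<notin> f ` N \<union> g ` Ea"
  proof (rule ccontr)
    assume "\<not> ?thesis"
    then have "{1..9::nat} \<subseteq> f ` N \<union> g ` Ea" by auto
    then have "card {1..9::nat} \<le> card (f ` N \<union> g ` Ea)"
      using finEa finN by (intro card_mono) auto
    then show False using cF by simp
  qed
  then obtain c where c: "c \<in> {1..9}" "c \<notin> f ` N \<union> g ` Ea" by blast
  have noloop: "{a} \<notin> E" using sg by (auto simp: simple_graph_def doubleton_eq_iff)
  have "ok_ex V E U (f(a:=c)) g"
    unfolding ok_ex_def
  proof (intro conjI ballI impI)
    fix v assume "v \<in> V - U" then show "(f(a:=c)) v \<in> {1..9}"
      using ok c by (cases "v = a") (auto simp: ok_ex_def)
  next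
    fix e assume "e \<in> E" then show "g e \<in> {1..9}" using ok by (auto simp: ok_ex_def)
  next
    fix x y assume xy: "x \<in> V - U" "y \<in> V - U" "{x,y} \<in> E"
    show "(f(a:=c)) x \<noteq> (f(a:=c)) y"
    proof (cases "x = a")
      case True
      then have "y \<noteq> a" using xy noloop by auto
      moreover have "y \<in> N" using xy True by (simp add: N_def)
      ultimately show ?thesis using True c by auto
    next
      case False
      show ?thesis
      proof (cases "y = a")
        case True
        moreover have "x \<in> N" using xy True by (simp add: N_def insert_commute)
        ultimately show ?thesis using False c by auto
      next
        case False2: False
        then show ?thesis using ok xy False by (auto simp: ok_ex_def)
      qed
    qed
  next
    fix e e' assume "e \<in> E" "e' \<in> E" "e \<noteq> e' \<and> e \<inter> e' \<noteq> {}"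
    then show "g e \<noteq> g e'" using ok by (auto simp: ok_ex_def)
  next
    fix v e assume "v \<in> V - U" "e \<in> E" "v \<in> e"
    then show "(f(a:=c)) v \<noteq> g e" using ok c by (cases "v = a") (auto simp: ok_ex_def Ea_def)
  qed
  then show ?thesis by blast
qed

lemma sg_finE: "simple_graph V E \<Longrightarrow> finite E"
proof -
  assume sg: "simple_graph V E"
  have "E \<subseteq> Pow V" using sg by (auto simp: simple_graph_def)
  moreover have "finite V" using sg by (simp add: simple_graph_def)
  ultimately show "finite E" by (meson finite_Pow_iff finite_subset)
qed

lemma sg_sub: "simple_graph V E \<Longrightarrow> E' \<subseteq> E \<Longrightarrow> simple_graph V E'"
  unfolding simple_graph_def by blast

lemma pe_parts:
  assumes "planar_embedding V E pos arcs"
  shows "inj_on pos V"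
    "\<forall>e\<in>E. \<exists>x y. e = {x, y} \<and> arc (arcs e) \<and> pathstart (arcs e) = pos x \<and> pathfinish (arcs e) = pos y"
    "\<forall>e\<in>E. \<forall>v\<in>V. pos v \<in> path_image (arcs e) \<longrightarrow> v \<in> e"
    "\<forall>e\<in>E. \<forall>e'\<in>E. e \<noteq> e' \<longrightarrow> path_image (arcs e) \<inter> path_image (arcs e') \<subseteq> pos ` (e \<inter> e')"
  using assms unfolding planar_embedding_def by simp_all

lemma planar_sub: assumes "planar V E" "E' \<subseteq> E" shows "planar V E'"
proof -
  obtain pos arcs where pe: "planar_embedding V E pos arcs" using assms(1) by (auto simp: planar_def)
  have "planar_embedding V E' pos arcs"
    unfolding planar_embedding_def
  proof (intro conjI ballI impI)
    show "inj_on pos V" using pe_parts(1)[OF pe] .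
  next
    fix e assume "e \<in> E'"
    then have "e \<in> E" using assms(2) by blast
    then show "\<exists>x y. e = {x, y} \<and> arc (arcs e) \<and> pathstart (arcs e) = pos x \<and> pathfinish (arcs e) = pos y"
      by (rule bspec[OF pe_parts(2)[OF pe]])
  next
    fix e v assume "e \<in> E'" "v \<in> V" "pos v \<in> path_image (arcs e)"
    then show "v \<in> e" using pe_parts(3)[OF pe] assms(2) by blast
  next
    fix e e' assume "e \<in> E'" "e' \<in> E'" "e \<noteq> e'"
    then show "path_image (arcs e) \<inter> path_image (arcs e') \<subseteq> pos ` (e \<inter> e')"
      using pe_parts(4)[OF pe] assms(2) by blast
  qed
  then show ?thesis by (auto simp: planar_def)
qed

lemma maxdeg_sub:
  assumes "simple_graph V E" "max_degree_le V E k" "E' \<subseteq> E"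
  shows "max_degree_le V E' k"
  unfolding max_degree_le_def
proof
  fix v assume "v \<in> V"
  have "degree E' v \<le> degree E v" unfolding degree_def
    using assms(3) sg_finE[OF assms(1)] by (intro card_mono) auto
  then show "degree E' v \<le> k" using assms \<open>v\<in>V\<close> by (auto simp: max_degree_le_def)
qed

lemma fan_sub: assumes "has_4fan V E'" "E' \<subseteq> E" shows "has_4fan V E"
proof -
  have ad: "\<And>a b. adj E' a b \<Longrightarrow> adj E a b" using assms(2) by (auto simp: adj_def)
  obtain c u1 u2 u3 u4 u5 where F: "distinct [c, u1, u2, u3, u4, u5]" "set [c, u1, u2, u3, u4, u5] \<subseteq> V"
     "adj E' c u1" "adj E' c u2" "adj E' c u3" "adj E' c u4" "adj E' c u5"
     "adj E' u1 u2" "adj E' u2 u3" "adj E' u3 u4" "adj E' u4 u5"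
    using assms(1) unfolding has_4fan_def by blast
  show ?thesis unfolding has_4fan_def
    by (rule exI[of _ c], rule exI[of _ u1], rule exI[of _ u2], rule exI[of _ u3],
             rule exI[of _ u4], rule exI[of _ u5]) (use F in \<open>simp add: ad\<close>)
qed

lemma transfer_iso:
  fixes h :: "'a \<Rightarrow> 'b"
  assumes sg: "simple_graph V E" and pl: "planar V E" and md: "max_degree_le V E k"
    and nf: "\<not> has_4fan V E" and inj: "inj_on h V"
  shows "simple_graph (h ` V) ((`) h ` E)" "planar (h ` V) ((`) h ` E)"
    "max_degree_le (h ` V) ((`) h ` E) k" "\<not> has_4fan (h ` V) ((`) h ` E)"
    "card (h ` V) = card V" "card ((`) h ` E) = card E"
    "total_colorable (h ` V) ((`) h ` E) n \<Longrightarrow> total_colorable V E n"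
proof -
  have EP: "E \<subseteq> Pow V" using sg by (auto simp: simple_graph_def)
  have injP: "inj_on ((`) h) E" using inj_on_image_Pow[OF inj] EP inj_on_subset by blast
  have cancel: "\<And>S. S \<subseteq> V \<Longrightarrow> inv_into V h ` h ` S = S" using inv_into_image_cancel[OF inj] by blast
  have inv1: "\<And>x. x \<in> V \<Longrightarrow> inv_into V h (h x) = x" using inj by simp
  have memh: "\<And>a e. a \<in> V \<Longrightarrow> e \<in> E \<Longrightarrow> (h a \<in> h ` e) = (a \<in> e)"
    using inj EP by (auto simp: inj_on_def)
  show "simple_graph (h ` V) ((`) h ` E)"
    unfolding simple_graph_def
  proof (intro conjI ballI)
    show "finite (h ` V)" using sg by (simp add: simple_graph_def)
  next
    fix e assume "e \<in> (`) h ` E"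
    then obtain e0 where e0: "e0 \<in> E" "e = h ` e0" by auto
    then obtain x y where xy: "x \<in> V" "y \<in> V" "x \<noteq> y" "e0 = {x,y}" using sg by (auto simp: simple_graph_def)
    have "h x \<noteq> h y" using inj xy by (auto simp: inj_on_def)
    then show "\<exists>x y. x \<in> h ` V \<and> y \<in> h ` V \<and> x \<noteq> y \<and> e = {x, y}"
      using xy e0 by auto
  qed
  show "card (h ` V) = card V" using inj by (simp add: card_image)
  show "card ((`) h ` E) = card E" using injP by (simp add: card_image)
  show "max_degree_le (h ` V) ((`) h ` E) k"
    unfolding max_degree_le_def
  proof
    fix b assume "b \<in> h ` V"
    then obtain a where a: "a \<in> V" "b = h a" by auto
    have "{e \<in> (`) h ` E. b \<in> e} = (`) h ` {e\<in>E. a \<in> e}" using a memh by auto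
    then have "degree ((`) h ` E) b = card {e\<in>E. a \<in> e}"
      unfolding degree_def using injP by (metis (no_types, lifting) card_image inj_on_subset mem_Collect_eq subsetI)
    then show "degree ((`) h ` E) b \<le> k" using md a by (auto simp: max_degree_le_def degree_def)
  qed
  show "\<not> has_4fan (h ` V) ((`) h ` E)"
  proof
    assume "has_4fan (h ` V) ((`) h ` E)"
    then obtain c u1 u2 u3 u4 u5 where F: "distinct [c, u1, u2, u3, u4, u5]" "set [c, u1, u2, u3, u4, u5] \<subseteq> h ` V"
     "adj ((`) h ` E) c u1" "adj ((`) h ` E) c u2" "adj ((`) h ` E) c u3" "adj ((`) h ` E) c u4" "adj ((`) h ` E) c u5"
     "adj ((`) h ` E) u1 u2" "adj ((`) h ` E) u2 u3" "adj ((`) h ` E) u3 u4" "adj ((`) h ` E) u4 u5"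
      unfolding has_4fan_def by blast
    define i where "i = inv_into V h"
    have bk: "\<And>a b. a \<in> h ` V \<Longrightarrow> b \<in> h ` V \<Longrightarrow> adj ((`) h ` E) a b \<Longrightarrow> adj E (i a) (i b)"
    proof -
      fix a b assume ab: "a \<in> h ` V" "b \<in> h ` V" "adj ((`) h ` E) a b"
      then obtain e where e: "e \<in> E" "{a,b} = h ` e" by (auto simp: adj_def)
      have eV: "e \<subseteq> V" using EP e by auto
      have "{i a, i b} = i ` {a,b}" by simp
      also have "\<dots> = i ` (h ` e)" using e(2) by simp
      also have "\<dots> = e" using cancel[OF eV] by (simp add: i_def)
      finally show "adj E (i a) (i b)" using e by (simp add: adj_def)
    qed
    have ih: "\<And>a. a \<in> h ` V \<Longrightarrow> h (i a) = a \<and> i a \<in> V" unfolding i_def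
      by (simp add: f_inv_into_f inv_into_into)
    have "has_4fan V E"
      unfolding has_4fan_def
      apply (rule exI[of _ "i c"], rule exI[of _ "i u1"], rule exI[of _ "i u2"], rule exI[of _ "i u3"],
             rule exI[of _ "i u4"], rule exI[of _ "i u5"])
    proof (intro conjI)
      have "\<And>a b. a \<in> h ` V \<Longrightarrow> b \<in> h ` V \<Longrightarrow> a \<noteq> b \<Longrightarrow> i a \<noteq> i b" using ih by metis
      then show "distinct [i c, i u1, i u2, i u3, i u4, i u5]" using F(1,2) by simp
      show "set [i c, i u1, i u2, i u3, i u4, i u5] \<subseteq> V" using F(2) ih by simp
    qed (use F in \<open>auto intro!: bk\<close>)
    then show False using nf by simp
  qed
  show "planar (h ` V) ((`) h ` E)"
  proof -
    obtain pos arcs where pe: "planar_embedding V E pos arcs" using pl by (auto simp: planar_def)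
    define i where "i = inv_into V h"
    have ih: "\<And>a. a \<in> h ` V \<Longrightarrow> h (i a) = a \<and> i a \<in> V" unfolding i_def
      by (simp add: f_inv_into_f inv_into_into)
    have ie: "\<And>e. e \<in> E \<Longrightarrow> i ` h ` e = e" using cancel EP by (auto simp: i_def)
    have "planar_embedding (h ` V) ((`) h ` E) (pos \<circ> i) (\<lambda>e. arcs (i ` e))"
      unfolding planar_embedding_def
    proof (intro conjI ballI impI)
      show "inj_on (pos \<circ> i) (h ` V)" using pe_parts(1)[OF pe] ih unfolding inj_on_def
        by (metis comp_apply)
    next
      fix e assume "e \<in> (`) h ` E"
      then obtain e0 where e0: "e0 \<in> E" "e = h ` e0" by auto
      then obtain x y where xy: "e0 = {x,y}" "arc (arcs e0)" "pathstart (arcs e0) = pos x" "pathfinish (arcs e0) = pos y"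
        using bspec[OF pe_parts(2)[OF pe] e0(1)] by blast
      have xyV: "x \<in> V" "y \<in> V" using EP e0 xy by auto
      show "\<exists>x y. e = {x, y} \<and> arc (arcs (i ` e)) \<and> pathstart (arcs (i ` e)) = (pos \<circ> i) x \<and> pathfinish (arcs (i ` e)) = (pos \<circ> i) y"
        apply (rule exI[of _ "h x"], rule exI[of _ "h y"])
        using e0 xy ie[OF e0(1)] xyV by (simp add: i_def inv1)
    next
      fix e v assume ev: "e \<in> (`) h ` E" "v \<in> h ` V" "(pos \<circ> i) v \<in> path_image (arcs (i ` e))"
      then obtain e0 where e0: "e0 \<in> E" "e = h ` e0" by auto
      have "pos (i v) \<in> path_image (arcs e0)" using ev e0 ie[OF e0(1)] by simp
      then have "i v \<in> e0" using pe_parts(3)[OF pe] e0(1) ih[OF ev(2)] by blast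
      then show "v \<in> e" using e0 ih[OF ev(2)] by (metis image_eqI)
    next
      fix e e' assume ee: "e \<in> (`) h ` E" "e' \<in> (`) h ` E" "e \<noteq> e'"
      then obtain e0 e0' where e0: "e0 \<in> E" "e = h ` e0" "e0' \<in> E" "e' = h ` e0'" by auto
      have "e0 \<noteq> e0'" using ee e0 by auto
      then have "path_image (arcs e0) \<inter> path_image (arcs e0') \<subseteq> pos ` (e0 \<inter> e0')"
        using pe_parts(4)[OF pe] e0 by blast
      moreover have "e0 \<inter> e0' = i ` (e \<inter> e')"
      proof -
        have "h ` (e0 \<inter> e0') = e \<inter> e'" using e0 inj EP by (simp add: inj_on_image_Int subset_iff)
        then show ?thesis using cancel EP e0 by (metis Int_lower1 i_def order_trans PowD subsetD)
      qed
      ultimately show "path_image (arcs (i ` e)) \<inter> path_image (arcs (i ` e')) \<subseteq> (pos \<circ> i) ` (e \<inter> e')"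
        using ie e0 by (simp add: image_comp)
    qed
    then show ?thesis by (auto simp: planar_def)
  qed
  assume "total_colorable (h ` V) ((`) h ` E) n"
  then obtain f g where fg: "total_coloring (h ` V) ((`) h ` E) n f g" by (auto simp: total_colorable_def)
  have "total_coloring V E n (f \<circ> h) (g \<circ> (`) h)"
    unfolding total_coloring_def
  proof (intro conjI ballI impI)
    fix v assume "v \<in> V" then show "(f \<circ> h) v \<in> {1..n}" using fg by (auto simp: total_coloring_def)
  next
    fix e assume "e \<in> E" then show "(g \<circ> (`) h) e \<in> {1..n}" using fg by (auto simp: total_coloring_def)
  next
    fix x y assume "x \<in> V" "y \<in> V" "{x,y} \<in> E"
    moreover have "h ` {x,y} = {h x, h y}" by simp
    ultimately show "(f \<circ> h) x \<noteq> (f \<circ> h) y" using fg unfolding total_coloring_def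
      by (metis comp_apply image_eqI)
  next
    fix e e' assume ee: "e \<in> E" "e' \<in> E" "e \<noteq> e' \<and> e \<inter> e' \<noteq> {}"
    have "h ` e \<noteq> h ` e'" using injP ee by (auto simp: inj_on_def)
    moreover have "h ` e \<inter> h ` e' \<noteq> {}" using ee by auto
    ultimately show "(g \<circ> (`) h) e \<noteq> (g \<circ> (`) h) e'" using fg ee unfolding total_coloring_def by auto
  next
    fix v e assume "v \<in> V" "e \<in> E" "v \<in> e"
    then show "(f \<circ> h) v \<noteq> (g \<circ> (`) h) e" using fg unfolding total_coloring_def by auto
  qed
  then show "total_colorable V E n" by (auto simp: total_colorable_def)
qed

lemma smaller_colorable:
  assumes mc: "minimal_counterexample V E" and sub: "E' \<subseteq> E" and ne: "E' \<noteq> E"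
  shows "total_colorable V E' 9"
proof -
  have sg: "simple_graph V E" and pl: "planar V E" and md: "max_degree_le V E 8"
    and nf: "\<not> has_4fan V E"
    using mc by (auto simp: minimal_counterexample_def max_degree_eq_def)
  have sg': "simple_graph V E'" using sg sub by (rule sg_sub)
  have pl': "planar V E'" using pl sub by (rule planar_sub)
  have md': "max_degree_le V E' 8" using sg md sub by (rule maxdeg_sub)
  have nf': "\<not> has_4fan V E'" using nf sub fan_sub by blast
  have finV: "finite V" using sg by (simp add: simple_graph_def)
  obtain h :: "'a \<Rightarrow> nat" and m where h: "h ` V = {i. i < m}" "inj_on h V"
    using finite_imp_inj_to_nat_seg[OF finV] by blast
  note T = transfer_iso[OF sg' pl' md' nf' h(2)]
  have "card E' < card E" using sub ne sg_finE[OF sg] by (simp add: psubset_card_mono psubset_eq)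
  then have "card (h ` V) + card ((`) h ` E') < card V + card E" using T by simp
  then have "total_colorable (h ` V) ((`) h ` E') 9"
    using mc T unfolding minimal_counterexample_def by blast
  then show ?thesis using T by blast
qed

definition good :: "nat \<Rightarrow> nat \<Rightarrow> nat \<Rightarrow> nat \<Rightarrow> nat \<Rightarrow> nat \<Rightarrow> nat \<Rightarrow> nat \<Rightarrow> nat \<Rightarrow> nat \<Rightarrow> nat \<Rightarrow> nat \<Rightarrow> nat \<Rightarrow> nat \<Rightarrow> nat \<Rightarrow> nat \<Rightarrow>
   nat \<Rightarrow> nat \<Rightarrow> nat \<Rightarrow> nat \<Rightarrow> nat \<Rightarrow> nat \<Rightarrow> nat \<Rightarrow> nat \<Rightarrow> nat \<Rightarrow> nat \<Rightarrow> nat \<Rightarrow> nat \<Rightarrow> nat \<Rightarrow> nat \<Rightarrow> nat \<Rightarrow> bool" where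
 "good vx vt vw vy vu vr vs fv tx tw yw yp zp zq uq ur Vx Vt Vw Vy Vu Vr Vz Tx Tw Yw Yp Zp Zq Uq Ur \<longleftrightarrow>
   Vt \<in> {1..9} \<and> Vy \<in> {1..9} \<and> Vu \<in> {1..9} \<and> Vz \<in> {1..9} \<and>
   distinct [Vx,Vt,Vw,Vy,Vu,Vr,Vz,vs,fv] \<and> distinct [Vt,Tx,Tw] \<and> distinct [Vy,Yw,Yp] \<and>
   distinct [Vz,Zp,Zq] \<and> distinct [Vu,Uq,Ur] \<and>
   Vx \<noteq> Tx \<and> distinct [Vw,Tw,Yw] \<and> Yp \<noteq> Zp \<and> Zq \<noteq> Uq \<and> Vr \<noteq> Ur \<and>
   Vx \<in> {vx,tx} \<and> Tx \<in> {vx,tx} \<and> Vw \<in> {vw,tw,yw} \<and> Tw \<in> {vw,tw,yw} \<and> Yw \<in> {vw,tw,yw} \<and>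
   Yp \<in> {yp,zp} \<and> Zp \<in> {yp,zp} \<and> Zq \<in> {zq,uq} \<and> Uq \<in> {zq,uq} \<and> Vr \<in> {vr,ur} \<and> Ur \<in> {vr,ur}"

lemma local_fix:
  fixes vx vt vw vy vu vr vs fv tx tw yw yp zp zq uq ur :: nat
  assumes R: "vx \<in> {1..9}" "vt \<in> {1..9}" "vw \<in> {1..9}" "vy \<in> {1..9}" "vu \<in> {1..9}" "vr \<in> {1..9}"
     "vs \<in> {1..9}" "fv \<in> {1..9}"
  and Dv: "distinct [vx,vt,vw,vy,vu,vr,vs,fv]"
  and H: "vx \<noteq> tx" "vt \<noteq> tx" "vt \<noteq> tw" "tx \<noteq> tw" "vw \<noteq> tw" "vw \<noteq> yw" "tw \<noteq> yw"
     "vy \<noteq> yw" "vy \<noteq> yp" "yw \<noteq> yp" "yp \<noteq> zp" "zp \<noteq> zq" "zq \<noteq> uq" "vu \<noteq> uq" "vu \<noteq> ur"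
     "uq \<noteq> ur" "vr \<noteq> ur"
  shows "\<exists>Vx Vt Vw Vy Vu Vr Vz Tx Tw Yw Yp Zp Zq Uq Ur.
     good vx vt vw vy vu vr vs fv tx tw yw yp zp zq uq ur Vx Vt Vw Vy Vu Vr Vz Tx Tw Yw Yp Zp Zq Uq Ur"
proof -
  have "\<exists>al\<in>{1..9::nat}. al \<notin> {vx,vt,vw,vy,vu,vr,vs,fv}"
  proof (rule ccontr)
    assume "\<not> ?thesis"
    then have "{1..9::nat} \<subseteq> {vx,vt,vw,vy,vu,vr,vs,fv}" by auto
    then have "card {1..9::nat} \<le> card (set [vx,vt,vw,vy,vu,vr,vs,fv])" by (intro card_mono) auto
    also have "\<dots> \<le> 8" using card_length[of "[vx,vt,vw,vy,vu,vr,vs,fv]"] by simp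
    finally show False by simp
  qed
  then obtain al where al0: "al \<in> {1..9}" "al \<notin> {vx,vt,vw,vy,vu,vr,vs,fv}" by blast
  then have al: "al \<in> {1..9}" "al \<noteq> vx" "al \<noteq> vt" "al \<noteq> vw" "al \<noteq> vy" "al \<noteq> vu" "al \<noteq> vr" "al \<noteq> vs" "al \<noteq> fv"
    by auto
  show ?thesis
  proof (cases "zp = al")
    assume L0: "zp = al"
    show ?thesis
    proof (cases "yw = al")
      assume L1: "yw = al"
      show ?thesis
      proof (cases "vw = yp")
        assume L2: "vw = yp"
        show ?thesis
        proof (cases "al = tx")
          assume L3: "al = tx"
          show ?thesis
          proof (cases "vy = zq")
            assume L4: "vy = zq"
            show ?thesis
            proof (cases "vx = tw")
              assume L5: "vx = tw"
              have "good vx vt vw vy vu vr vs fv tx tw yw yp zp zq uq ur tx vt vw vy vu vr vx vx yw tw yp zp zq uq ur"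
                unfolding good_def using R Dv H al L0 L1 L2 L3 L4 L5 by auto
              then show ?thesis by blast
            next
              assume L5: "vx \<noteq> tw"
              have "good vx vt vw vy vu vr vs fv tx tw yw yp zp zq uq ur tx vt vw vy vu vr vx vx tw yw yp zp zq uq ur"
                unfolding good_def using R Dv H al L0 L1 L2 L3 L4 L5 by auto
              then show ?thesis by blast
            qed
          next
            assume L4: "vy \<noteq> zq"
            show ?thesis
            proof (cases "yp = zq")
              assume L5: "yp = zq"
              show ?thesis
              proof (cases "vx = tw")
                assume L6: "vx = tw"
                have "good vx vt vw vy vu vr vs fv tx tw yw yp zp zq uq ur tx vt vw vy vu vr vx vx yw tw yp zp zq uq ur"
                  unfolding good_def using R Dv H al L0 L1 L2 L3 L4 L5 L6 by auto
                then show ?thesis by blast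
              next
                assume L6: "vx \<noteq> tw"
                have "good vx vt vw vy vu vr vs fv tx tw yw yp zp zq uq ur tx vt vw vy vu vr vx vx tw yw yp zp zq uq ur"
                  unfolding good_def using R Dv H al L0 L1 L2 L3 L4 L5 L6 by auto
                then show ?thesis by blast
              qed
            next
              assume L5: "yp \<noteq> zq"
              have "good vx vt vw vy vu vr vs fv tx tw yw yp zp zq uq ur vx vt yw vw vu vr vy tx vw tw zp yp zq uq ur"
                unfolding good_def using R Dv H al L0 L1 L2 L3 L4 L5 by auto
              then show ?thesis by blast
            qed
          qed
        next
          assume L3: "al \<noteq> tx"
          show ?thesis
          proof (cases "vt = zq")
            assume L4: "vt = zq"
            have "good vx vt vw vy vu vr vs fv tx tw yw yp zp zq uq ur vx al vw vt vu vr vy tx tw yw yp zp zq uq ur"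
              unfolding good_def using R Dv H al L0 L1 L2 L3 L4 by auto
            then show ?thesis by blast
          next
            assume L4: "vt \<noteq> zq"
            have "good vx vt vw vy vu vr vs fv tx tw yw yp zp zq uq ur vx al vw vy vu vr vt tx tw yw yp zp zq uq ur"
              unfolding good_def using R Dv H al L0 L1 L2 L3 L4 by auto
            then show ?thesis by blast
          qed
        qed
      next
        assume L2: "vw \<noteq> yp"
        show ?thesis
        proof (cases "vw = zq")
          assume L3: "vw = zq"
          show ?thesis
          proof (cases "al = tx")
            assume L4: "al = tx"
            have "good vx vt vw vy vu vr vs fv tx tw yw yp zp zq uq ur vx vt yw vw vu vr vy tx vw tw zp yp zq uq ur"
              unfolding good_def using R Dv H al L0 L1 L2 L3 L4 by auto
            then show ?thesis by blast
          next
            assume L4: "al \<noteq> tx"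
            have "good vx vt vw vy vu vr vs fv tx tw yw yp zp zq uq ur vx al vw vy vu vr vt tx tw yw yp zp zq uq ur"
              unfolding good_def using R Dv H al L0 L1 L2 L3 L4 by auto
            then show ?thesis by blast
          qed
        next
          assume L3: "vw \<noteq> zq"
          have "good vx vt vw vy vu vr vs fv tx tw yw yp zp zq uq ur vx vt yw vy vu vr vw tx tw vw yp zp zq uq ur"
            unfolding good_def using R Dv H al L0 L1 L2 L3 by auto
          then show ?thesis by blast
        qed
      qed
    next
      assume L1: "yw \<noteq> al"
      show ?thesis
      proof (cases "vy = zq")
        assume L2: "vy = zq"
        have "good vx vt vw vy vu vr vs fv tx tw yw yp zp zq uq ur vx vt vw vy vu vr al tx tw yw zp yp zq uq ur"
          unfolding good_def using R Dv H al L0 L1 L2 by auto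
        then show ?thesis by blast
      next
        assume L2: "vy \<noteq> zq"
        have "good vx vt vw vy vu vr vs fv tx tw yw yp zp zq uq ur vx vt vw al vu vr vy tx tw yw yp zp zq uq ur"
          unfolding good_def using R Dv H al L0 L1 L2 by auto
        then show ?thesis by blast
      qed
    qed
  next
    assume L0: "zp \<noteq> al"
    show ?thesis
    proof (cases "zq = al")
      assume L1: "zq = al"
      show ?thesis
      proof (cases "ur = al")
        assume L2: "ur = al"
        show ?thesis
        proof (cases "vr = zp")
          assume L3: "vr = zp"
          show ?thesis
          proof (cases "al = tx")
            assume L4: "al = tx"
            show ?thesis
            proof (cases "vx = tw")
              assume L5: "vx = tw"
              show ?thesis
              proof (cases "vt = uq")
                assume L6: "vt = uq"
                show ?thesis
                proof (cases "vr = yw")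
                  assume L7: "vr = yw"
                  show ?thesis
                  proof (cases "al = yp")
                    assume L8: "al = yp"
                    have "good vx vt vw vy vu vr vs fv tx tw yw yp zp zq uq ur tx vt vw vy vu vr vx vx yw tw yp zp zq uq ur"
                      unfolding good_def using R Dv H al L0 L1 L2 L3 L4 L5 L6 L7 L8 by auto
                    then show ?thesis by blast
                  next
                    assume L8: "al \<noteq> yp"
                    have "good vx vt vw vy vu vr vs fv tx tw yw yp zp zq uq ur vx vt vw al vu vr vy tx tw yw yp zp zq uq ur"
                      unfolding good_def using R Dv H al L0 L1 L2 L3 L4 L5 L6 L7 L8 by auto
                    then show ?thesis by blast
                  qed
                next
                  assume L7: "vr \<noteq> yw"
                  have "good vx vt vw vy vu vr vs fv tx tw yw yp zp zq uq ur vx vt vw vr vy ur vu tx tw yw yp zp uq zq vr"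
                    unfolding good_def using R Dv H al L0 L1 L2 L3 L4 L5 L6 L7 by auto
                  then show ?thesis by blast
                qed
              next
                assume L6: "vt \<noteq> uq"
                show ?thesis
                proof (cases "zp = uq")
                  assume L7: "zp = uq"
                  show ?thesis
                  proof (cases "al = yw")
                    assume L8: "al = yw"
                    show ?thesis
                    proof (cases "vt = yp")
                      assume L9: "vt = yp"
                      have "good vx vt vw vy vu vr vs fv tx tw yw yp zp zq uq ur tx vt vw vy vu vr vx vx yw tw yp zp zq uq ur"
                        unfolding good_def using R Dv H al L0 L1 L2 L3 L4 L5 L6 L7 L8 L9 by auto
                      then show ?thesis by blast
                    next
                      assume L9: "vt \<noteq> yp"
                      have "good vx vt vw vy vu vr vs fv tx tw yw yp zp zq uq ur vx vr vw vy vu ur vt tx tw yw zp yp uq zq vr"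
                        unfolding good_def using R Dv H al L0 L1 L2 L3 L4 L5 L6 L7 L8 L9 by auto
                      then show ?thesis by blast
                    qed
                  next
                    assume L8: "al \<noteq> yw"
                    show ?thesis
                    proof (cases "al = yp")
                      assume L9: "al = yp"
                      show ?thesis
                      proof (cases "yw = zp")
                        assume L10: "yw = zp"
                        have "good vx vt vw vy vu vr vs fv tx tw yw yp zp zq uq ur tx vt vw vy vu vr vx vx yw tw yp zp zq uq ur"
                          unfolding good_def using R Dv H al L0 L1 L2 L3 L4 L5 L6 L7 L8 L9 L10 by auto
                        then show ?thesis by blast
                      next
                        assume L10: "yw \<noteq> zp"
                        have "good vx vt vw vy vu vr vs fv tx tw yw yp zp zq uq ur vx vr vw vy vu ur vt tx tw yw zp yp uq zq vr"
                          unfolding good_def using R Dv H al L0 L1 L2 L3 L4 L5 L6 L7 L8 L9 L10 by auto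
                        then show ?thesis by blast
                      qed
                    next
                      assume L9: "al \<noteq> yp"
                      have "good vx vt vw vy vu vr vs fv tx tw yw yp zp zq uq ur vx vt vw al vu vr vy tx tw yw yp zp zq uq ur"
                        unfolding good_def using R Dv H al L0 L1 L2 L3 L4 L5 L6 L7 L8 L9 by auto
                      then show ?thesis by blast
                    qed
                  qed
                next
                  assume L7: "zp \<noteq> uq"
                  have "good vx vt vw vy vu vr vs fv tx tw yw yp zp zq uq ur vx vr vw vy vu ur vt tx tw yw yp zp uq zq vr"
                    unfolding good_def using R Dv H al L0 L1 L2 L3 L4 L5 L6 L7 by auto
                  then show ?thesis by blast
                qed
              qed
            next
              assume L5: "vx \<noteq> tw"
              have "good vx vt vw vy vu vr vs fv tx tw yw yp zp zq uq ur tx vt vw vy vu vr vx vx tw yw yp zp zq uq ur"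
                unfolding good_def using R Dv H al L0 L1 L2 L3 L4 L5 by auto
              then show ?thesis by blast
            qed
          next
            assume L4: "al \<noteq> tx"
            show ?thesis
            proof (cases "al = tw")
              assume L5: "al = tw"
              show ?thesis
              proof (cases "al = yp")
                assume L6: "al = yp"
                show ?thesis
                proof (cases "tx = vw")
                  assume L7: "tx = vw"
                  show ?thesis
                  proof (cases "vt = yw")
                    assume L8: "vt = yw"
                    show ?thesis
                    proof (cases "zp = uq")
                      assume L9: "zp = uq"
                      have "good vx vt vw vy vu vr vs fv tx tw yw yp zp zq uq ur vx vr vw vy vu ur vt tx tw yw zp yp uq zq vr"
                        unfolding good_def using R Dv H al L0 L1 L2 L3 L4 L5 L6 L7 L8 L9 by auto
                      then show ?thesis by blast
                    next
                      assume L9: "zp \<noteq> uq"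
                      have "good vx vt vw vy vu vr vs fv tx tw yw yp zp zq uq ur vx vt vw vr vy ur vu tx tw yw yp zp uq zq vr"
                        unfolding good_def using R Dv H al L0 L1 L2 L3 L4 L5 L6 L7 L8 L9 by auto
                      then show ?thesis by blast
                    qed
                  next
                    assume L8: "vt \<noteq> yw"
                    have "good vx vt vw vy vu vr vs fv tx tw yw yp zp zq uq ur vx vt tw vy vu vr vw tx yw vw yp zp zq uq ur"
                      unfolding good_def using R Dv H al L0 L1 L2 L3 L4 L5 L6 L7 L8 by auto
                    then show ?thesis by blast
                  qed
                next
                  assume L7: "tx \<noteq> vw"
                  have "good vx vt vw vy vu vr vs fv tx tw yw yp zp zq uq ur vx vt tw vy vu vr vw tx vw yw yp zp zq uq ur"
                    unfolding good_def using R Dv H al L0 L1 L2 L3 L4 L5 L6 L7 by auto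
                  then show ?thesis by blast
                qed
              next
                assume L6: "al \<noteq> yp"
                have "good vx vt vw vy vu vr vs fv tx tw yw yp zp zq uq ur vx vt vw al vu vr vy tx tw yw yp zp zq uq ur"
                  unfolding good_def using R Dv H al L0 L1 L2 L3 L4 L5 L6 by auto
                then show ?thesis by blast
              qed
            next
              assume L5: "al \<noteq> tw"
              have "good vx vt vw vy vu vr vs fv tx tw yw yp zp zq uq ur vx al vw vy vu vr vt tx tw yw yp zp zq uq ur"
                unfolding good_def using R Dv H al L0 L1 L2 L3 L4 L5 by auto
              then show ?thesis by blast
            qed
          qed
        next
          assume L3: "vr \<noteq> zp"
          show ?thesis
          proof (cases "uq = vr")
            assume L4: "uq = vr"
            show ?thesis
            proof (cases "vr = yw")
              assume L5: "vr = yw"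
              show ?thesis
              proof (cases "vr = tx")
                assume L6: "vr = tx"
                show ?thesis
                proof (cases "al = tw")
                  assume L7: "al = tw"
                  show ?thesis
                  proof (cases "vw = zp")
                    assume L8: "vw = zp"
                    have "good vx vt vw vy vu vr vs fv tx tw yw yp zp zq uq ur vx vt tw vw vu vr vy tx vw yw yp zp zq uq ur"
                      unfolding good_def using R Dv H al L0 L1 L2 L3 L4 L5 L6 L7 L8 by auto
                    then show ?thesis by blast
                  next
                    assume L8: "vw \<noteq> zp"
                    have "good vx vt vw vy vu vr vs fv tx tw yw yp zp zq uq ur vx vt tw vy vu vr vw tx vw yw yp zp zq uq ur"
                      unfolding good_def using R Dv H al L0 L1 L2 L3 L4 L5 L6 L7 L8 by auto
                    then show ?thesis by blast
                  qed
                next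
                  assume L7: "al \<noteq> tw"
                  show ?thesis
                  proof (cases "vt = zp")
                    assume L8: "vt = zp"
                    have "good vx vt vw vy vu vr vs fv tx tw yw yp zp zq uq ur vx al vw vt vu vr vy tx tw yw yp zp zq uq ur"
                      unfolding good_def using R Dv H al L0 L1 L2 L3 L4 L5 L6 L7 L8 by auto
                    then show ?thesis by blast
                  next
                    assume L8: "vt \<noteq> zp"
                    have "good vx vt vw vy vu vr vs fv tx tw yw yp zp zq uq ur vx al vw vy vu vr vt tx tw yw yp zp zq uq ur"
                      unfolding good_def using R Dv H al L0 L1 L2 L3 L4 L5 L6 L7 L8 by auto
                    then show ?thesis by blast
                  qed
                qed
              next
                assume L6: "vr \<noteq> tx"
                show ?thesis
                proof (cases "vt = zp")
                  assume L7: "vt = zp"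
                  have "good vx vt vw vy vu vr vs fv tx tw yw yp zp zq uq ur vx vr vw vy vu ur vt tx tw yw zp yp uq zq vr"
                    unfolding good_def using R Dv H al L0 L1 L2 L3 L4 L5 L6 L7 by auto
                  then show ?thesis by blast
                next
                  assume L7: "vt \<noteq> zp"
                  have "good vx vt vw vy vu vr vs fv tx tw yw yp zp zq uq ur vx vr vw vy vu ur vt tx tw yw yp zp uq zq vr"
                    unfolding good_def using R Dv H al L0 L1 L2 L3 L4 L5 L6 L7 by auto
                  then show ?thesis by blast
                qed
              qed
            next
              assume L5: "vr \<noteq> yw"
              show ?thesis
              proof (cases "vr = yp")
                assume L6: "vr = yp"
                show ?thesis
                proof (cases "al = yw")
                  assume L7: "al = yw"
                  show ?thesis
                  proof (cases "vw = zp")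
                    assume L8: "vw = zp"
                    show ?thesis
                    proof (cases "al = tx")
                      assume L9: "al = tx"
                      show ?thesis
                      proof (cases "vr = tw")
                        assume L10: "vr = tw"
                        have "good vx vt vw vy vu vr vs fv tx tw yw yp zp zq uq ur tx vt vw vy vu vr vx vx tw yw yp zp zq uq ur"
                          unfolding good_def using R Dv H al L0 L1 L2 L3 L4 L5 L6 L7 L8 L9 L10 by auto
                        then show ?thesis by blast
                      next
                        assume L10: "vr \<noteq> tw"
                        have "good vx vt vw vy vu vr vs fv tx tw yw yp zp zq uq ur vx vr vw vy vu ur vt tx tw yw yp zp uq zq vr"
                          unfolding good_def using R Dv H al L0 L1 L2 L3 L4 L5 L6 L7 L8 L9 L10 by auto
                        then show ?thesis by blast
                      qed
                    next
                      assume L9: "al \<noteq> tx"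
                      have "good vx vt vw vy vu vr vs fv tx tw yw yp zp zq uq ur vx al vw vy vu vr vt tx tw yw yp zp zq uq ur"
                        unfolding good_def using R Dv H al L0 L1 L2 L3 L4 L5 L6 L7 L8 L9 by auto
                      then show ?thesis by blast
                    qed
                  next
                    assume L8: "vw \<noteq> zp"
                    have "good vx vt vw vy vu vr vs fv tx tw yw yp zp zq uq ur vx vt yw vy vu vr vw tx tw vw yp zp zq uq ur"
                      unfolding good_def using R Dv H al L0 L1 L2 L3 L4 L5 L6 L7 L8 by auto
                    then show ?thesis by blast
                  qed
                next
                  assume L7: "al \<noteq> yw"
                  show ?thesis
                  proof (cases "vy = zp")
                    assume L8: "vy = zp"
                    show ?thesis
                    proof (cases "al = tx")
                      assume L9: "al = tx"
                      show ?thesis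
                      proof (cases "vx = tw")
                        assume L10: "vx = tw"
                        have "good vx vt vw vy vu vr vs fv tx tw yw yp zp zq uq ur vx vy vw al vu vr vt tx tw yw yp zp zq uq ur"
                          unfolding good_def using R Dv H al L0 L1 L2 L3 L4 L5 L6 L7 L8 L9 L10 by auto
                        then show ?thesis by blast
                      next
                        assume L10: "vx \<noteq> tw"
                        have "good vx vt vw vy vu vr vs fv tx tw yw yp zp zq uq ur tx vt vw vy vu vr vx vx tw yw yp zp zq uq ur"
                          unfolding good_def using R Dv H al L0 L1 L2 L3 L4 L5 L6 L7 L8 L9 L10 by auto
                        then show ?thesis by blast
                      qed
                    next
                      assume L9: "al \<noteq> tx"
                      show ?thesis
                      proof (cases "al = tw")
                        assume L10: "al = tw"
                        show ?thesis
                        proof (cases "vy = tx")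
                          assume L11: "vy = tx"
                          have "good vx vt vw vy vu vr vs fv tx tw yw yp zp zq uq ur vx vr vw vy vu ur vt tx tw yw yp zp uq zq vr"
                            unfolding good_def using R Dv H al L0 L1 L2 L3 L4 L5 L6 L7 L8 L9 L10 L11 by auto
                          then show ?thesis by blast
                        next
                          assume L11: "vy \<noteq> tx"
                          have "good vx vt vw vy vu vr vs fv tx tw yw yp zp zq uq ur vx vy vw al vu vr vt tx tw yw yp zp zq uq ur"
                            unfolding good_def using R Dv H al L0 L1 L2 L3 L4 L5 L6 L7 L8 L9 L10 L11 by auto
                          then show ?thesis by blast
                        qed
                      next
                        assume L10: "al \<noteq> tw"
                        have "good vx vt vw vy vu vr vs fv tx tw yw yp zp zq uq ur vx al vw vy vu vr vt tx tw yw yp zp zq uq ur"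
                          unfolding good_def using R Dv H al L0 L1 L2 L3 L4 L5 L6 L7 L8 L9 L10 by auto
                        then show ?thesis by blast
                      qed
                    qed
                  next
                    assume L8: "vy \<noteq> zp"
                    have "good vx vt vw vy vu vr vs fv tx tw yw yp zp zq uq ur vx vt vw al vu vr vy tx tw yw yp zp zq uq ur"
                      unfolding good_def using R Dv H al L0 L1 L2 L3 L4 L5 L6 L7 L8 by auto
                    then show ?thesis by blast
                  qed
                qed
              next
                assume L6: "vr \<noteq> yp"
                show ?thesis
                proof (cases "vu = zp")
                  assume L7: "vu = zp"
                  show ?thesis
                  proof (cases "al = tx")
                    assume L8: "al = tx"
                    show ?thesis
                    proof (cases "vx = tw")
                      assume L9: "vx = tw"
                      have "good vx vt vw vy vu vr vs fv tx tw yw yp zp zq uq ur vx vr vw vy vu ur vt tx tw yw yp zp uq zq vr"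
                        unfolding good_def using R Dv H al L0 L1 L2 L3 L4 L5 L6 L7 L8 L9 by auto
                      then show ?thesis by blast
                    next
                      assume L9: "vx \<noteq> tw"
                      have "good vx vt vw vy vu vr vs fv tx tw yw yp zp zq uq ur tx vt vw vy vu vr vx vx tw yw yp zp zq uq ur"
                        unfolding good_def using R Dv H al L0 L1 L2 L3 L4 L5 L6 L7 L8 L9 by auto
                      then show ?thesis by blast
                    qed
                  next
                    assume L8: "al \<noteq> tx"
                    show ?thesis
                    proof (cases "al = tw")
                      assume L9: "al = tw"
                      show ?thesis
                      proof (cases "vr = tx")
                        assume L10: "vr = tx"
                        have "good vx vt vw vy vu vr vs fv tx tw yw yp zp zq uq ur vx vt tw vy vu vr vw tx vw yw yp zp zq uq ur"
                          unfolding good_def using R Dv H al L0 L1 L2 L3 L4 L5 L6 L7 L8 L9 L10 by auto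
                        then show ?thesis by blast
                      next
                        assume L10: "vr \<noteq> tx"
                        have "good vx vt vw vy vu vr vs fv tx tw yw yp zp zq uq ur vx vr vw vy vu ur vt tx tw yw yp zp uq zq vr"
                          unfolding good_def using R Dv H al L0 L1 L2 L3 L4 L5 L6 L7 L8 L9 L10 by auto
                        then show ?thesis by blast
                      qed
                    next
                      assume L9: "al \<noteq> tw"
                      have "good vx vt vw vy vu vr vs fv tx tw yw yp zp zq uq ur vx al vw vy vu vr vt tx tw yw yp zp zq uq ur"
                        unfolding good_def using R Dv H al L0 L1 L2 L3 L4 L5 L6 L7 L8 L9 by auto
                      then show ?thesis by blast
                    qed
                  qed
                next
                  assume L7: "vu \<noteq> zp"
                  have "good vx vt vw vy vu vr vs fv tx tw yw yp zp zq uq ur vx vt vw vr vy ur vu tx tw yw yp zp uq zq vr"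
                    unfolding good_def using R Dv H al L0 L1 L2 L3 L4 L5 L6 L7 by auto
                  then show ?thesis by blast
                qed
              qed
            qed
          next
            assume L4: "uq \<noteq> vr"
            have "good vx vt vw vy vu vr vs fv tx tw yw yp zp zq uq ur vx vt vw vy vu ur vr tx tw yw yp zp zq uq vr"
              unfolding good_def using R Dv H al L0 L1 L2 L3 L4 by auto
            then show ?thesis by blast
          qed
        qed
      next
        assume L2: "ur \<noteq> al"
        show ?thesis
        proof (cases "vu = zp")
          assume L3: "vu = zp"
          have "good vx vt vw vy vu vr vs fv tx tw yw yp zp zq uq ur vx vt vw vy vu vr al tx tw yw yp zp uq zq ur"
            unfolding good_def using R Dv H al L0 L1 L2 L3 by auto
          then show ?thesis by blast
        next
          assume L3: "vu \<noteq> zp"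
          have "good vx vt vw vy vu vr vs fv tx tw yw yp zp zq uq ur vx vt vw vy al vr vu tx tw yw yp zp zq uq ur"
            unfolding good_def using R Dv H al L0 L1 L2 L3 by auto
          then show ?thesis by blast
        qed
      qed
    next
      assume L1: "zq \<noteq> al"
      have "good vx vt vw vy vu vr vs fv tx tw yw yp zp zq uq ur vx vt vw vy vu vr al tx tw yw yp zp zq uq ur"
        unfolding good_def using R Dv H al L0 L1 by auto
      then show ?thesis by blast
    qed
  qed
qed

lemma sg_edge: "simple_graph V E \<Longrightarrow> {a,b} \<in> E \<Longrightarrow> a \<noteq> b \<and> a \<in> V \<and> b \<in> V"
  unfolding simple_graph_def by (metis doubleton_eq_iff insert_absorb2 insert_iff singleton_insert_inj_eq)

lemma ext_vertex:
  assumes tc: "total_coloring V E' k f g"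
    and cE: "\<forall>e\<in>E. c \<in> e \<longrightarrow> e \<in> E'"
    and Dc: "Dc \<subseteq> E'" "\<forall>e\<in>Dc. c \<in> e"
    and same: "\<forall>e\<in>E. c \<in> e \<longrightarrow> e \<notin> Dc \<longrightarrow> g' e = g e"
    and img: "\<forall>e\<in>Dc. g' e \<in> g ` Dc"
    and inj: "\<forall>e1\<in>Dc. \<forall>e2\<in>Dc. e1 \<noteq> e2 \<longrightarrow> g' e1 \<noteq> g' e2"
  shows "\<forall>e1\<in>E. \<forall>e2\<in>E. c \<in> e1 \<longrightarrow> c \<in> e2 \<longrightarrow> e1 \<noteq> e2 \<longrightarrow> g' e1 \<noteq> g' e2"
    "c \<in> V \<Longrightarrow> \<forall>e\<in>E. c \<in> e \<longrightarrow> f c \<noteq> g' e"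
proof -
  have gp: "\<And>e1 e2. e1 \<in> E' \<Longrightarrow> e2 \<in> E' \<Longrightarrow> c \<in> e1 \<Longrightarrow> c \<in> e2 \<Longrightarrow> e1 \<noteq> e2 \<Longrightarrow> g e1 \<noteq> g e2"
    using tc unfolding total_coloring_def by blast
  show "\<forall>e1\<in>E. \<forall>e2\<in>E. c \<in> e1 \<longrightarrow> c \<in> e2 \<longrightarrow> e1 \<noteq> e2 \<longrightarrow> g' e1 \<noteq> g' e2"
  proof (intro ballI impI)
    fix e1 e2 assume e: "e1 \<in> E" "e2 \<in> E" "c \<in> e1" "c \<in> e2" "e1 \<noteq> e2"
    have e': "e1 \<in> E'" "e2 \<in> E'" using cE e by auto
    show "g' e1 \<noteq> g' e2"
    proof (cases "e1 \<in> Dc")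
      case True note T1 = this
      show ?thesis
      proof (cases "e2 \<in> Dc")
        case True then show ?thesis using T1 inj e by blast
      next
        case False
        obtain e3 where e3: "e3 \<in> Dc" "g' e1 = g e3" using img T1 by force
        have "g e3 \<noteq> g e2" using gp[of e3 e2] e3 e' e Dc False by auto
        then show ?thesis using same e False e3 by auto
      qed
    next
      case False note F1 = this
      show ?thesis
      proof (cases "e2 \<in> Dc")
        case True
        obtain e3 where e3: "e3 \<in> Dc" "g' e2 = g e3" using img True by force
        have "g e3 \<noteq> g e1" using gp[of e3 e1] e3 e' e Dc F1 by auto
        then show ?thesis using same e F1 e3 by auto
      next
        case False
        then show ?thesis using F1 same e gp[OF e'] by auto
      qed
    qed
  qed
  assume cV: "c \<in> V"
  have fp: "\<And>e. e \<in> E' \<Longrightarrow> c \<in> e \<Longrightarrow> f c \<noteq> g e"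
    using tc cV unfolding total_coloring_def by blast
  show "\<forall>e\<in>E. c \<in> e \<longrightarrow> f c \<noteq> g' e"
  proof (intro ballI impI)
    fix e assume e: "e \<in> E" "c \<in> e"
    show "f c \<noteq> g' e"
    proof (cases "e \<in> Dc")
      case True
      obtain e3 where e3: "e3 \<in> Dc" "g' e = g e3" using img True by force
      then show ?thesis using fp[of e3] Dc by auto
    next
      case False then show ?thesis using same e fp cE by auto
    qed
  qed
qed

theorem lemma2p11:
  fixes V :: "'a set" and E :: "'a set set"
  assumes "minimal_counterexample V E"
  shows "\<not> (\<exists>v x t w y z u r p q.
            v \<in> V \<and> degree E v = 8 \<and>
            distinct [x, t, w, y, z, u, r] \<and>
            adj E v x \<and> adj E v t \<and> adj E v w \<and> adj E v y \<and> adj E v z \<and> adj E v u \<and> adj E v r \<and>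
            p \<in> V \<and> q \<in> V \<and> p \<noteq> q \<and>
            p \<notin> {v, x, t, w, y, z, u, r} \<and> q \<notin> {v, x, t, w, y, z, u, r} \<and>
            adj E x t \<and> adj E t w \<and> adj E w y \<and> adj E u r \<and>
            adj E p y \<and> adj E p z \<and> adj E q z \<and> adj E q u \<and>
            degree E t = 3 \<and> degree E y = 3 \<and> degree E z = 3 \<and> degree E u = 3)"
proof
  assume "\<exists>v x t w y z u r p q.
            v \<in> V \<and> degree E v = 8 \<and>
            distinct [x, t, w, y, z, u, r] \<and>
            adj E v x \<and> adj E v t \<and> adj E v w \<and> adj E v y \<and> adj E v z \<and> adj E v u \<and> adj E v r \<and>
            p \<in> V \<and> q \<in> V \<and> p \<noteq> q \<and>
            p \<notin> {v, x, t, w, y, z, u, r} \<and> q \<notin> {v, x, t, w, y, z, u, r} \<and>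
            adj E x t \<and> adj E t w \<and> adj E w y \<and> adj E u r \<and>
            adj E p y \<and> adj E p z \<and> adj E q z \<and> adj E q u \<and>
            degree E t = 3 \<and> degree E y = 3 \<and> degree E z = 3 \<and> degree E u = 3"
  then obtain v x t w y z u r p q where
    vV: "v \<in> V" and dv: "degree E v = 8" and dis: "distinct [x, t, w, y, z, u, r]"
    and avx: "adj E v x" and avt: "adj E v t" and avw: "adj E v w" and avy: "adj E v y"
    and avz: "adj E v z" and avu: "adj E v u" and avr: "adj E v r"
    and pV: "p \<in> V" and qV: "q \<in> V" and pq: "p \<noteq> q"
    and pn: "p \<notin> {v, x, t, w, y, z, u, r}" and qn: "q \<notin> {v, x, t, w, y, z, u, r}"
    and axt: "adj E x t" and atw: "adj E t w" and awy: "adj E w y" and aur: "adj E u r"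
    and apy: "adj E p y" and apz: "adj E p z" and aqz: "adj E q z" and aqu: "adj E q u"
    and dt: "degree E t = 3" and dy: "degree E y = 3" and dz: "degree E z = 3" and du: "degree E u = 3"
    by blast
  have mc: "minimal_counterexample V E" by fact
  have sg: "simple_graph V E" and ntc: "\<not> total_colorable V E 9"
    using mc by (auto simp: minimal_counterexample_def)
  have finE: "finite E" using sg by (rule sg_finE)
  note A = avx avt avw avy avz avu avr axt atw awy aur apy apz aqz aqu
  note Ad = A[unfolded adj_def]
  have Ed: "{v,x} \<in> E" "{v,t} \<in> E" "{v,w} \<in> E" "{v,y} \<in> E" "{v,z} \<in> E" "{v,u} \<in> E" "{v,r} \<in> E"
    "{x,t} \<in> E" "{t,w} \<in> E" "{w,y} \<in> E" "{u,r} \<in> E" "{p,y} \<in> E" "{p,z} \<in> E" "{q,z} \<in> E" "{q,u} \<in> E"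
    using Ad by simp_all
  have inV: "x \<in> V" "t \<in> V" "w \<in> V" "y \<in> V" "z \<in> V" "u \<in> V" "r \<in> V"
    using sg_edge[OF sg Ed(1)] sg_edge[OF sg Ed(2)] sg_edge[OF sg Ed(3)] sg_edge[OF sg Ed(4)]
      sg_edge[OF sg Ed(5)] sg_edge[OF sg Ed(6)] sg_edge[OF sg Ed(7)] by auto
  have nev: "v \<noteq> x" "v \<noteq> t" "v \<noteq> w" "v \<noteq> y" "v \<noteq> z" "v \<noteq> u" "v \<noteq> r"
    using sg_edge[OF sg Ed(1)] sg_edge[OF sg Ed(2)] sg_edge[OF sg Ed(3)] sg_edge[OF sg Ed(4)]
      sg_edge[OF sg Ed(5)] sg_edge[OF sg Ed(6)] sg_edge[OF sg Ed(7)] by auto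
  have ne: "x \<noteq> t" "x \<noteq> w" "x \<noteq> y" "x \<noteq> z" "x \<noteq> u" "x \<noteq> r"
    "t \<noteq> w" "t \<noteq> y" "t \<noteq> z" "t \<noteq> u" "t \<noteq> r" "w \<noteq> y" "w \<noteq> z" "w \<noteq> u" "w \<noteq> r"
    "y \<noteq> z" "y \<noteq> u" "y \<noteq> r" "z \<noteq> u" "z \<noteq> r" "u \<noteq> r"
    "p \<noteq> v" "p \<noteq> x" "p \<noteq> t" "p \<noteq> w" "p \<noteq> y" "p \<noteq> z" "p \<noteq> u" "p \<noteq> r"
    "q \<noteq> v" "q \<noteq> x" "q \<noteq> t" "q \<noteq> w" "q \<noteq> y" "q \<noteq> z" "q \<noteq> u" "q \<noteq> r"
    using dis pn qn by auto
  note NE = nev ne pq nev[symmetric] ne[symmetric] pq[symmetric]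
  define L7 where "L7 = {{v,x},{v,t},{v,w},{v,y},{v,z},{v,u},{v,r}}"
  define Ev where "Ev = {e\<in>E. v \<in> e}"
  have cEv: "card Ev = 8" using dv by (simp add: degree_def Ev_def)
  have finEv: "finite Ev" using finE by (simp add: Ev_def)
  have L7sub: "L7 \<subseteq> Ev" using Ed by (simp add: L7_def Ev_def)
  have dd: "\<And>a b c. b \<noteq> c \<Longrightarrow> {a,b} \<noteq> {a,c}" by (auto simp: doubleton_eq_iff)
  have "distinct [{v,x},{v,t},{v,w},{v,y},{v,z},{v,u},{v,r}]" using ne by (simp add: dd)
  then have cL7: "card L7 = 7" unfolding L7_def using distinct_card by fastforce
  have "card (Ev - L7) = 1" using card_Diff_subset[OF _ L7sub] cL7 cEv finEv finite_subset[OF L7sub] by simp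
  then obtain es where es: "Ev - L7 = {es}" by (rule card_1_singletonE)
  then have esE: "es \<in> E" "v \<in> es" "es \<notin> L7" by (auto simp: Ev_def)
  obtain a b where ab: "a \<in> V" "b \<in> V" "a \<noteq> b" "es = {a,b}" using sg esE(1) by (auto simp: simple_graph_def)
  obtain s where s: "es = {v,s}" "s \<in> V" using ab esE(2) by (auto simp: insert_commute)
  have EvEq: "Ev = insert {v,s} L7" using es L7sub s by auto
  have vs: "{v,s} \<in> E" using esE s by simp
  have nes: "v \<noteq> s" using sg_edge[OF sg vs] by simp
  have nes2: "s \<noteq> x" "s \<noteq> t" "s \<noteq> w" "s \<noteq> y" "s \<noteq> z" "s \<noteq> u" "s \<noteq> r"
    using esE(3) s by (auto simp: L7_def)
  note NE2 = NE nes nes2 nes[symmetric] nes2[symmetric]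
  have dd2: "\<And>a b c d. a \<noteq> c \<Longrightarrow> a \<noteq> d \<Longrightarrow> {a,b} \<noteq> {c,d}" by (auto simp: doubleton_eq_iff)
  have Ev_eq: "{e\<in>E. v \<in> e} = {{v,x},{v,t},{v,w},{v,y},{v,z},{v,u},{v,r},{v,s}}"
    using EvEq by (auto simp: Ev_def L7_def)
  have sub3: "\<And>a A. A \<subseteq> {e\<in>E. a \<in> e} \<Longrightarrow> card A = 3 \<Longrightarrow> degree E a = 3 \<Longrightarrow> {e\<in>E. a \<in> e} = A"
  proof -
    fix a A assume h: "A \<subseteq> {e\<in>E. a \<in> e}" "card A = 3" "degree E a = 3"
    show "{e\<in>E. a \<in> e} = A"
      using card_subset_eq[OF _ h(1)] h finE by (simp add: degree_def)
  qed
  have c3: "\<And>a b c. a \<noteq> b \<Longrightarrow> a \<noteq> c \<Longrightarrow> b \<noteq> c \<Longrightarrow> card {a,b,c} = 3" by simp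
  have Et_eq: "{e\<in>E. t \<in> e} = {{v,t},{x,t},{t,w}}"
    by (rule sub3[OF _ c3 dt]) (use Ed NE in \<open>simp_all add: doubleton_eq_iff\<close>)
  have Ey_eq: "{e\<in>E. y \<in> e} = {{v,y},{w,y},{p,y}}"
    by (rule sub3[OF _ c3 dy]) (use Ed NE in \<open>simp_all add: doubleton_eq_iff\<close>)
  have Ez_eq: "{e\<in>E. z \<in> e} = {{v,z},{p,z},{q,z}}"
    by (rule sub3[OF _ c3 dz]) (use Ed NE in \<open>simp_all add: doubleton_eq_iff\<close>)
  have Eu_eq: "{e\<in>E. u \<in> e} = {{v,u},{q,u},{u,r}}"
    by (rule sub3[OF _ c3 du]) (use Ed NE in \<open>simp_all add: doubleton_eq_iff\<close>)
  define E' where "E' = E - {{v,z}}"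
  have "total_colorable V E' 9" using smaller_colorable[OF mc, of E'] Ed(5) by (auto simp: E'_def)
  then obtain f g where tc: "total_coloring V E' 9 f g" by (auto simp: total_colorable_def)
  have E'd: "{v,x} \<in> E'" "{v,t} \<in> E'" "{v,w} \<in> E'" "{v,y} \<in> E'" "{v,u} \<in> E'" "{v,r} \<in> E'" "{v,s} \<in> E'"
    "{x,t} \<in> E'" "{t,w} \<in> E'" "{w,y} \<in> E'" "{u,r} \<in> E'" "{p,y} \<in> E'" "{p,z} \<in> E'" "{q,z} \<in> E'" "{q,u} \<in> E'"
    using Ed vs NE2 by (auto simp: E'_def doubleton_eq_iff)
  have grng: "\<And>e. e \<in> E' \<Longrightarrow> g e \<in> {1..9}" using tc by (auto simp: total_coloring_def)
  have gne: "\<And>e1 e2 c. e1 \<in> E' \<Longrightarrow> e2 \<in> E' \<Longrightarrow> c \<in> e1 \<Longrightarrow> c \<in> e2 \<Longrightarrow> e1 \<noteq> e2 \<Longrightarrow> g e1 \<noteq> g e2"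
    using tc unfolding total_coloring_def by blast
  have fgne: "\<And>e c. e \<in> E' \<Longrightarrow> c \<in> V \<Longrightarrow> c \<in> e \<Longrightarrow> f c \<noteq> g e"
    using tc unfolding total_coloring_def by blast
  have fv: "f v \<in> {1..9}" using tc vV by (auto simp: total_coloring_def)
  have Dv: "distinct [g {v,x}, g {v,t}, g {v,w}, g {v,y}, g {v,u}, g {v,r}, g {v,s}, f v]"
    using gne[OF E'd(1) E'd(2), of v] gne[OF E'd(1) E'd(3), of v] gne[OF E'd(1) E'd(4), of v]
      gne[OF E'd(1) E'd(5), of v] gne[OF E'd(1) E'd(6), of v] gne[OF E'd(1) E'd(7), of v]
      gne[OF E'd(2) E'd(3), of v] gne[OF E'd(2) E'd(4), of v]
      gne[OF E'd(2) E'd(5), of v] gne[OF E'd(2) E'd(6), of v] gne[OF E'd(2) E'd(7), of v]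
      gne[OF E'd(3) E'd(4), of v]
      gne[OF E'd(3) E'd(5), of v] gne[OF E'd(3) E'd(6), of v] gne[OF E'd(3) E'd(7), of v]
      gne[OF E'd(4) E'd(5), of v] gne[OF E'd(4) E'd(6), of v] gne[OF E'd(4) E'd(7), of v]
      gne[OF E'd(5) E'd(6), of v] gne[OF E'd(5) E'd(7), of v] gne[OF E'd(6) E'd(7), of v]
      fgne[OF E'd(1) vV] fgne[OF E'd(2) vV] fgne[OF E'd(3) vV] fgne[OF E'd(4) vV]
      fgne[OF E'd(5) vV] fgne[OF E'd(6) vV] fgne[OF E'd(7) vV] NE2
    by (auto simp: doubleton_eq_iff)
  have Hs: "g {v,x} \<noteq> g {x,t}" "g {v,t} \<noteq> g {x,t}" "g {v,t} \<noteq> g {t,w}" "g {x,t} \<noteq> g {t,w}"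
     "g {v,w} \<noteq> g {t,w}" "g {v,w} \<noteq> g {w,y}" "g {t,w} \<noteq> g {w,y}"
     "g {v,y} \<noteq> g {w,y}" "g {v,y} \<noteq> g {p,y}" "g {w,y} \<noteq> g {p,y}" "g {p,y} \<noteq> g {p,z}"
     "g {p,z} \<noteq> g {q,z}" "g {q,z} \<noteq> g {q,u}" "g {v,u} \<noteq> g {q,u}" "g {v,u} \<noteq> g {u,r}"
     "g {q,u} \<noteq> g {u,r}" "g {v,r} \<noteq> g {u,r}"
    using gne[OF E'd(1) E'd(8), of x] gne[OF E'd(2) E'd(8), of t] gne[OF E'd(2) E'd(9), of t]
      gne[OF E'd(8) E'd(9), of t] gne[OF E'd(3) E'd(9), of w] gne[OF E'd(3) E'd(10), of w]
      gne[OF E'd(9) E'd(10), of w] gne[OF E'd(4) E'd(10), of y] gne[OF E'd(4) E'd(12), of y]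
      gne[OF E'd(10) E'd(12), of y] gne[OF E'd(12) E'd(13), of p] gne[OF E'd(13) E'd(14), of z]
      gne[OF E'd(14) E'd(15), of q] gne[OF E'd(5) E'd(15), of u] gne[OF E'd(5) E'd(11), of u]
      gne[OF E'd(15) E'd(11), of u] gne[OF E'd(6) E'd(11), of r] NE2
    by (auto simp: doubleton_eq_iff)
  obtain Vx Vt Vw Vy Vu Vr Vz Tx Tw Yw Yp Zp Zq Uq Ur where
    gd: "good (g {v,x}) (g {v,t}) (g {v,w}) (g {v,y}) (g {v,u}) (g {v,r}) (g {v,s}) (f v)
      (g {x,t}) (g {t,w}) (g {w,y}) (g {p,y}) (g {p,z}) (g {q,z}) (g {q,u}) (g {u,r})
      Vx Vt Vw Vy Vu Vr Vz Tx Tw Yw Yp Zp Zq Uq Ur"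
    using local_fix[OF grng[OF E'd(1)] grng[OF E'd(2)] grng[OF E'd(3)] grng[OF E'd(4)]
      grng[OF E'd(5)] grng[OF E'd(6)] grng[OF E'd(7)] fv Dv Hs] by blast
  note G = gd[unfolded good_def]
  have Gs: "Vt \<in> {1..9}" "Vy \<in> {1..9}" "Vu \<in> {1..9}" "Vz \<in> {1..9}"
    "distinct [Vx,Vt,Vw,Vy,Vu,Vr,Vz,g {v,s},f v]" "distinct [Vt,Tx,Tw]" "distinct [Vy,Yw,Yp]"
    "distinct [Vz,Zp,Zq]" "distinct [Vu,Uq,Ur]" "Vx \<noteq> Tx" "distinct [Vw,Tw,Yw]" "Yp \<noteq> Zp" "Zq \<noteq> Uq" "Vr \<noteq> Ur"
    "Vx \<in> {g {v,x}, g {x,t}}" "Tx \<in> {g {v,x}, g {x,t}}" "Vw \<in> {g {v,w}, g {t,w}, g {w,y}}"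
    "Tw \<in> {g {v,w}, g {t,w}, g {w,y}}" "Yw \<in> {g {v,w}, g {t,w}, g {w,y}}"
    "Yp \<in> {g {p,y}, g {p,z}}" "Zp \<in> {g {p,y}, g {p,z}}" "Zq \<in> {g {q,z}, g {q,u}}" "Uq \<in> {g {q,z}, g {q,u}}"
    "Vr \<in> {g {v,r}, g {u,r}}" "Ur \<in> {g {v,r}, g {u,r}}"
    using G by blast+
  define g' where "g' e = (if e = {v,x} then Vx else if e = {v,t} then Vt else if e = {v,w} then Vw
     else if e = {v,y} then Vy else if e = {v,u} then Vu else if e = {v,r} then Vr else if e = {v,z} then Vz
     else if e = {x,t} then Tx else if e = {t,w} then Tw else if e = {w,y} then Yw else if e = {p,y} then Yp
     else if e = {p,z} then Zp else if e = {q,z} then Zq else if e = {q,u} then Uq else if e = {u,r} then Ur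
     else g e)" for e
  define Dset where "Dset = {{v,x},{v,t},{v,w},{v,y},{v,u},{v,r},{v,z},{x,t},{t,w},{w,y},{p,y},{p,z},{q,z},{q,u},{u,r}}"
  have gsame: "\<And>e. e \<notin> Dset \<Longrightarrow> g' e = g e" by (simp add: g'_def Dset_def)
  have gv: "g' {v,x} = Vx" "g' {v,t} = Vt" "g' {v,w} = Vw" "g' {v,y} = Vy" "g' {v,u} = Vu" "g' {v,r} = Vr"
    "g' {v,z} = Vz" "g' {x,t} = Tx" "g' {t,w} = Tw" "g' {w,y} = Yw" "g' {p,y} = Yp" "g' {p,z} = Zp"
    "g' {q,z} = Zq" "g' {q,u} = Uq" "g' {u,r} = Ur" "g' {v,s} = g {v,s}"
    using NE2 by (simp_all add: g'_def doubleton_eq_iff)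
  have ex_x: "\<forall>e1\<in>E. \<forall>e2\<in>E. x \<in> e1 \<longrightarrow> x \<in> e2 \<longrightarrow> e1 \<noteq> e2 \<longrightarrow> g' e1 \<noteq> g' e2"
      "\<forall>e\<in>E. x \<in> e \<longrightarrow> f x \<noteq> g' e"
  proof -
    have a1: "\<forall>e\<in>E. x \<in> e \<longrightarrow> e \<in> E'" using NE2 by (auto simp: E'_def)
    have a2: "{{v,x},{x,t}} \<subseteq> E'" "\<forall>e\<in>{{v,x},{x,t}}. x \<in> e" using E'd by auto
    have a3: "\<forall>e\<in>E. x \<in> e \<longrightarrow> e \<notin> {{v,x},{x,t}} \<longrightarrow> g' e = g e"
    proof (intro ballI impI)
      fix e assume "e \<in> E" "x \<in> e" "e \<notin> {{v,x},{x,t}}"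
      then have "e \<notin> Dset" using NE2 by (auto simp: Dset_def)
      then show "g' e = g e" by (rule gsame)
    qed
    have a4: "\<forall>e\<in>{{v,x},{x,t}}. g' e \<in> g ` {{v,x},{x,t}}" using Gs(15) Gs(16) by (auto simp: gv)
    have a5: "\<forall>e1\<in>{{v,x},{x,t}}. \<forall>e2\<in>{{v,x},{x,t}}. e1 \<noteq> e2 \<longrightarrow> g' e1 \<noteq> g' e2" using Gs(10) by (auto simp: gv)
    show "\<forall>e1\<in>E. \<forall>e2\<in>E. x \<in> e1 \<longrightarrow> x \<in> e2 \<longrightarrow> e1 \<noteq> e2 \<longrightarrow> g' e1 \<noteq> g' e2"
      by (rule ext_vertex(1)[OF tc a1 a2 a3 a4 a5])
    show "\<forall>e\<in>E. x \<in> e \<longrightarrow> f x \<noteq> g' e"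
      by (rule ext_vertex(2)[OF tc a1 a2 a3 a4 a5 inV(1)])
  qed
  have ex_w: "\<forall>e1\<in>E. \<forall>e2\<in>E. w \<in> e1 \<longrightarrow> w \<in> e2 \<longrightarrow> e1 \<noteq> e2 \<longrightarrow> g' e1 \<noteq> g' e2"
      "\<forall>e\<in>E. w \<in> e \<longrightarrow> f w \<noteq> g' e"
  proof -
    have a1: "\<forall>e\<in>E. w \<in> e \<longrightarrow> e \<in> E'" using NE2 by (auto simp: E'_def)
    have a2: "{{v,w},{t,w},{w,y}} \<subseteq> E'" "\<forall>e\<in>{{v,w},{t,w},{w,y}}. w \<in> e" using E'd by auto
    have a3: "\<forall>e\<in>E. w \<in> e \<longrightarrow> e \<notin> {{v,w},{t,w},{w,y}} \<longrightarrow> g' e = g e"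
    proof (intro ballI impI)
      fix e assume "e \<in> E" "w \<in> e" "e \<notin> {{v,w},{t,w},{w,y}}"
      then have "e \<notin> Dset" using NE2 by (auto simp: Dset_def)
      then show "g' e = g e" by (rule gsame)
    qed
    have a4: "\<forall>e\<in>{{v,w},{t,w},{w,y}}. g' e \<in> g ` {{v,w},{t,w},{w,y}}" using Gs(17) Gs(18) Gs(19) by (auto simp: gv)
    have a5: "\<forall>e1\<in>{{v,w},{t,w},{w,y}}. \<forall>e2\<in>{{v,w},{t,w},{w,y}}. e1 \<noteq> e2 \<longrightarrow> g' e1 \<noteq> g' e2" using Gs(11) by (auto simp: gv)
    show "\<forall>e1\<in>E. \<forall>e2\<in>E. w \<in> e1 \<longrightarrow> w \<in> e2 \<longrightarrow> e1 \<noteq> e2 \<longrightarrow> g' e1 \<noteq> g' e2"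
      by (rule ext_vertex(1)[OF tc a1 a2 a3 a4 a5])
    show "\<forall>e\<in>E. w \<in> e \<longrightarrow> f w \<noteq> g' e"
      by (rule ext_vertex(2)[OF tc a1 a2 a3 a4 a5 inV(3)])
  qed
  have ex_p: "\<forall>e1\<in>E. \<forall>e2\<in>E. p \<in> e1 \<longrightarrow> p \<in> e2 \<longrightarrow> e1 \<noteq> e2 \<longrightarrow> g' e1 \<noteq> g' e2"
      "\<forall>e\<in>E. p \<in> e \<longrightarrow> f p \<noteq> g' e"
  proof -
    have a1: "\<forall>e\<in>E. p \<in> e \<longrightarrow> e \<in> E'" using NE2 by (auto simp: E'_def)
    have a2: "{{p,y},{p,z}} \<subseteq> E'" "\<forall>e\<in>{{p,y},{p,z}}. p \<in> e" using E'd by auto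
    have a3: "\<forall>e\<in>E. p \<in> e \<longrightarrow> e \<notin> {{p,y},{p,z}} \<longrightarrow> g' e = g e"
    proof (intro ballI impI)
      fix e assume "e \<in> E" "p \<in> e" "e \<notin> {{p,y},{p,z}}"
      then have "e \<notin> Dset" using NE2 by (auto simp: Dset_def)
      then show "g' e = g e" by (rule gsame)
    qed
    have a4: "\<forall>e\<in>{{p,y},{p,z}}. g' e \<in> g ` {{p,y},{p,z}}" using Gs(20) Gs(21) by (auto simp: gv)
    have a5: "\<forall>e1\<in>{{p,y},{p,z}}. \<forall>e2\<in>{{p,y},{p,z}}. e1 \<noteq> e2 \<longrightarrow> g' e1 \<noteq> g' e2" using Gs(12) by (auto simp: gv)
    show "\<forall>e1\<in>E. \<forall>e2\<in>E. p \<in> e1 \<longrightarrow> p \<in> e2 \<longrightarrow> e1 \<noteq> e2 \<longrightarrow> g' e1 \<noteq> g' e2"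
      by (rule ext_vertex(1)[OF tc a1 a2 a3 a4 a5])
    show "\<forall>e\<in>E. p \<in> e \<longrightarrow> f p \<noteq> g' e"
      by (rule ext_vertex(2)[OF tc a1 a2 a3 a4 a5 pV])
  qed
  have ex_q: "\<forall>e1\<in>E. \<forall>e2\<in>E. q \<in> e1 \<longrightarrow> q \<in> e2 \<longrightarrow> e1 \<noteq> e2 \<longrightarrow> g' e1 \<noteq> g' e2"
      "\<forall>e\<in>E. q \<in> e \<longrightarrow> f q \<noteq> g' e"
  proof -
    have a1: "\<forall>e\<in>E. q \<in> e \<longrightarrow> e \<in> E'" using NE2 by (auto simp: E'_def)
    have a2: "{{q,z},{q,u}} \<subseteq> E'" "\<forall>e\<in>{{q,z},{q,u}}. q \<in> e" using E'd by auto
    have a3: "\<forall>e\<in>E. q \<in> e \<longrightarrow> e \<notin> {{q,z},{q,u}} \<longrightarrow> g' e = g e"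
    proof (intro ballI impI)
      fix e assume "e \<in> E" "q \<in> e" "e \<notin> {{q,z},{q,u}}"
      then have "e \<notin> Dset" using NE2 by (auto simp: Dset_def)
      then show "g' e = g e" by (rule gsame)
    qed
    have a4: "\<forall>e\<in>{{q,z},{q,u}}. g' e \<in> g ` {{q,z},{q,u}}" using Gs(22) Gs(23) by (auto simp: gv)
    have a5: "\<forall>e1\<in>{{q,z},{q,u}}. \<forall>e2\<in>{{q,z},{q,u}}. e1 \<noteq> e2 \<longrightarrow> g' e1 \<noteq> g' e2" using Gs(13) by (auto simp: gv)
    show "\<forall>e1\<in>E. \<forall>e2\<in>E. q \<in> e1 \<longrightarrow> q \<in> e2 \<longrightarrow> e1 \<noteq> e2 \<longrightarrow> g' e1 \<noteq> g' e2"
      by (rule ext_vertex(1)[OF tc a1 a2 a3 a4 a5])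
    show "\<forall>e\<in>E. q \<in> e \<longrightarrow> f q \<noteq> g' e"
      by (rule ext_vertex(2)[OF tc a1 a2 a3 a4 a5 qV])
  qed
  have ex_r: "\<forall>e1\<in>E. \<forall>e2\<in>E. r \<in> e1 \<longrightarrow> r \<in> e2 \<longrightarrow> e1 \<noteq> e2 \<longrightarrow> g' e1 \<noteq> g' e2"
      "\<forall>e\<in>E. r \<in> e \<longrightarrow> f r \<noteq> g' e"
  proof -
    have a1: "\<forall>e\<in>E. r \<in> e \<longrightarrow> e \<in> E'" using NE2 by (auto simp: E'_def)
    have a2: "{{v,r},{u,r}} \<subseteq> E'" "\<forall>e\<in>{{v,r},{u,r}}. r \<in> e" using E'd by auto
    have a3: "\<forall>e\<in>E. r \<in> e \<longrightarrow> e \<notin> {{v,r},{u,r}} \<longrightarrow> g' e = g e"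
    proof (intro ballI impI)
      fix e assume "e \<in> E" "r \<in> e" "e \<notin> {{v,r},{u,r}}"
      then have "e \<notin> Dset" using NE2 by (auto simp: Dset_def)
      then show "g' e = g e" by (rule gsame)
    qed
    have a4: "\<forall>e\<in>{{v,r},{u,r}}. g' e \<in> g ` {{v,r},{u,r}}" using Gs(24) Gs(25) by (auto simp: gv)
    have a5: "\<forall>e1\<in>{{v,r},{u,r}}. \<forall>e2\<in>{{v,r},{u,r}}. e1 \<noteq> e2 \<longrightarrow> g' e1 \<noteq> g' e2" using Gs(14) by (auto simp: gv)
    show "\<forall>e1\<in>E. \<forall>e2\<in>E. r \<in> e1 \<longrightarrow> r \<in> e2 \<longrightarrow> e1 \<noteq> e2 \<longrightarrow> g' e1 \<noteq> g' e2"
      by (rule ext_vertex(1)[OF tc a1 a2 a3 a4 a5])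
    show "\<forall>e\<in>E. r \<in> e \<longrightarrow> f r \<noteq> g' e"
      by (rule ext_vertex(2)[OF tc a1 a2 a3 a4 a5 inV(7)])
  qed
  have ok0: "ok_ex V E {t,y,z,u} f g'"
    unfolding ok_ex_def
  proof (intro conjI ballI impI)
    fix a assume "a \<in> V - {t,y,z,u}"
    then show "f a \<in> {1..9}" using tc by (auto simp: total_coloring_def)
  next
    fix e assume eE: "e \<in> E"
    show "g' e \<in> {1..9}"
    proof (cases "e \<in> Dset")
      case True
      have rg: "Vx \<in> {1..9}" "Tx \<in> {1..9}" "Vw \<in> {1..9}" "Tw \<in> {1..9}" "Yw \<in> {1..9}"
        "Yp \<in> {1..9}" "Zp \<in> {1..9}" "Zq \<in> {1..9}" "Uq \<in> {1..9}" "Vr \<in> {1..9}" "Ur \<in> {1..9}"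
        using Gs(15) grng[OF E'd(1)] grng[OF E'd(8)] apply auto[1]
        using Gs(16) grng[OF E'd(1)] grng[OF E'd(8)] apply auto[1]
        using Gs(17) grng[OF E'd(3)] grng[OF E'd(9)] grng[OF E'd(10)] apply auto[1]
        using Gs(18) grng[OF E'd(3)] grng[OF E'd(9)] grng[OF E'd(10)] apply auto[1]
        using Gs(19) grng[OF E'd(3)] grng[OF E'd(9)] grng[OF E'd(10)] apply auto[1]
        using Gs(20) grng[OF E'd(12)] grng[OF E'd(13)] apply auto[1]
        using Gs(21) grng[OF E'd(12)] grng[OF E'd(13)] apply auto[1]
        using Gs(22) grng[OF E'd(14)] grng[OF E'd(15)] apply auto[1]
        using Gs(23) grng[OF E'd(14)] grng[OF E'd(15)] apply auto[1]
        using Gs(24) grng[OF E'd(6)] grng[OF E'd(11)] apply auto[1]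
        using Gs(25) grng[OF E'd(6)] grng[OF E'd(11)] apply auto[1]
        done
      show ?thesis using True rg Gs(1) Gs(2) Gs(3) Gs(4) unfolding Dset_def by (auto simp: gv)
    next
      case False
      then have "e \<in> E'" using eE by (auto simp: E'_def Dset_def)
      then show ?thesis using False gsame grng by simp
    qed
  next
    fix a b assume ab: "a \<in> V - {t,y,z,u}" "b \<in> V - {t,y,z,u}" "{a,b} \<in> E"
    then have "{a,b} \<in> E'" by (auto simp: E'_def doubleton_eq_iff)
    then show "f a \<noteq> f b" using tc ab by (auto simp: total_coloring_def)
  next
    fix e1 e2 assume e12: "e1 \<in> E" "e2 \<in> E" "e1 \<noteq> e2 \<and> e1 \<inter> e2 \<noteq> {}"
    then obtain c where c12: "c \<in> e1" "c \<in> e2" by blast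
    have "c \<notin> {v,t,y,z,u,x,w,p,q,r} \<or> c = v \<or> c = t \<or> c = y \<or> c = z \<or> c = u \<or> c = x \<or> c = w \<or> c = p \<or> c = q \<or> c = r"
      by blast
    then show "g' e1 \<noteq> g' e2"
    proof (elim disjE)
      assume cn: "c \<notin> {v,t,y,z,u,x,w,p,q,r}"
      have "e1 \<notin> Dset" "e2 \<notin> Dset" using cn c12 by (auto simp: Dset_def)
      moreover have "e1 \<in> E'" "e2 \<in> E'" using cn c12 e12 by (auto simp: E'_def)
      ultimately show ?thesis using gsame gne[of e1 e2 c] c12 e12 by simp
      next
        assume cc: "c = v"
        have m1: "e1 \<in> {e\<in>E. v \<in> e}" and m2: "e2 \<in> {e\<in>E. v \<in> e}" using e12 c12 cc by auto
        have "distinct (map g' [{v,x},{v,t},{v,w},{v,y},{v,u},{v,r},{v,z},{v,s}])" using Gs(5) by (simp add: gv)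
        then have "inj_on g' (set [{v,x},{v,t},{v,w},{v,y},{v,u},{v,r},{v,z},{v,s}])" by (simp only: distinct_map)
        moreover have "{e\<in>E. v \<in> e} = set [{v,x},{v,t},{v,w},{v,y},{v,u},{v,r},{v,z},{v,s}]" unfolding Ev_eq by auto
        ultimately have I: "inj_on g' {e\<in>E. c \<in> e}" using cc by simp
        show ?thesis using I m1 m2 e12(3) cc unfolding inj_on_def by blast
      next
        assume cc: "c = t"
        have m1: "e1 \<in> {e\<in>E. t \<in> e}" and m2: "e2 \<in> {e\<in>E. t \<in> e}" using e12 c12 cc by auto
        have "distinct (map g' [{v,t},{x,t},{t,w}])" using Gs(6) by (simp add: gv)
        then have "inj_on g' (set [{v,t},{x,t},{t,w}])" by (simp only: distinct_map)
        moreover have "{e\<in>E. t \<in> e} = set [{v,t},{x,t},{t,w}]" unfolding Et_eq by auto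
        ultimately have I: "inj_on g' {e\<in>E. c \<in> e}" using cc by simp
        show ?thesis using I m1 m2 e12(3) cc unfolding inj_on_def by blast
      next
        assume cc: "c = y"
        have m1: "e1 \<in> {e\<in>E. y \<in> e}" and m2: "e2 \<in> {e\<in>E. y \<in> e}" using e12 c12 cc by auto
        have "distinct (map g' [{v,y},{w,y},{p,y}])" using Gs(7) by (simp add: gv)
        then have "inj_on g' (set [{v,y},{w,y},{p,y}])" by (simp only: distinct_map)
        moreover have "{e\<in>E. y \<in> e} = set [{v,y},{w,y},{p,y}]" unfolding Ey_eq by auto
        ultimately have I: "inj_on g' {e\<in>E. c \<in> e}" using cc by simp
        show ?thesis using I m1 m2 e12(3) cc unfolding inj_on_def by blast
      next
        assume cc: "c = z"
        have m1: "e1 \<in> {e\<in>E. z \<in> e}" and m2: "e2 \<in> {e\<in>E. z \<in> e}" using e12 c12 cc by auto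
        have "distinct (map g' [{v,z},{p,z},{q,z}])" using Gs(8) by (simp add: gv)
        then have "inj_on g' (set [{v,z},{p,z},{q,z}])" by (simp only: distinct_map)
        moreover have "{e\<in>E. z \<in> e} = set [{v,z},{p,z},{q,z}]" unfolding Ez_eq by auto
        ultimately have I: "inj_on g' {e\<in>E. c \<in> e}" using cc by simp
        show ?thesis using I m1 m2 e12(3) cc unfolding inj_on_def by blast
      next
        assume cc: "c = u"
        have m1: "e1 \<in> {e\<in>E. u \<in> e}" and m2: "e2 \<in> {e\<in>E. u \<in> e}" using e12 c12 cc by auto
        have "distinct (map g' [{v,u},{q,u},{u,r}])" using Gs(9) by (simp add: gv)
        then have "inj_on g' (set [{v,u},{q,u},{u,r}])" by (simp only: distinct_map)
        moreover have "{e\<in>E. u \<in> e} = set [{v,u},{q,u},{u,r}]" unfolding Eu_eq by auto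
        ultimately have I: "inj_on g' {e\<in>E. c \<in> e}" using cc by simp
        show ?thesis using I m1 m2 e12(3) cc unfolding inj_on_def by blast
      next
        assume cc: "c = x"
        show ?thesis using ex_x(1) e12 c12 cc by blast
      next
        assume cc: "c = w"
        show ?thesis using ex_w(1) e12 c12 cc by blast
      next
        assume cc: "c = p"
        show ?thesis using ex_p(1) e12 c12 cc by blast
      next
        assume cc: "c = q"
        show ?thesis using ex_q(1) e12 c12 cc by blast
      next
        assume cc: "c = r"
        show ?thesis using ex_r(1) e12 c12 cc by blast
    qed
  next
    fix a e assume ae: "a \<in> V - {t,y,z,u}" "e \<in> E" "a \<in> e"
    have "a \<notin> {v,t,y,z,u,x,w,p,q,r} \<or> a = v \<or> a = x \<or> a = w \<or> a = p \<or> a = q \<or> a = r"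
      using ae by blast
    then show "f a \<noteq> g' e"
    proof (elim disjE)
      assume cn: "a \<notin> {v,t,y,z,u,x,w,p,q,r}"
      have "e \<notin> Dset" using cn ae by (auto simp: Dset_def)
      moreover have "e \<in> E'" using cn ae by (auto simp: E'_def)
      ultimately show ?thesis using gsame fgne[of e a] ae by simp
      next
        assume cc: "a = v"
        have m1: "e \<in> {e\<in>E. v \<in> e}" using ae cc by auto
        have "\<forall>c\<in>{Vx,Vt,Vw,Vy,Vu,Vr,Vz,g {v,s}}. c \<noteq> f v" using Gs(5) by simp
        moreover have "g' e \<in> {Vx,Vt,Vw,Vy,Vu,Vr,Vz,g {v,s}}" using m1 unfolding Ev_eq by (auto simp: gv)
        ultimately show ?thesis using cc by metis
      next
        assume cc: "a = x"
        show ?thesis using ex_x(2) ae cc by blast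
      next
        assume cc: "a = w"
        show ?thesis using ex_w(2) ae cc by blast
      next
        assume cc: "a = p"
        show ?thesis using ex_p(2) ae cc by blast
      next
        assume cc: "a = q"
        show ?thesis using ex_q(2) ae cc by blast
      next
        assume cc: "a = r"
        show ?thesis using ex_r(2) ae cc by blast
    qed
  qed
  have d4: "degree E t \<le> 4" "degree E y \<le> 4" "degree E z \<le> 4" "degree E u \<le> 4"
    using dt dy dz du by simp_all
  obtain f1 where ok1: "ok_ex V E {y,z,u} f1 g'" using fix_vertex[OF sg ok0 inV(2) d4(1)] by blast
  obtain f2 where ok2: "ok_ex V E {z,u} f2 g'" using fix_vertex[OF sg ok1 inV(4) d4(2)] by blast
  obtain f3 where ok3: "ok_ex V E {u} f3 g'" using fix_vertex[OF sg ok2 inV(5) d4(3)] by blast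
  obtain f4 where ok4: "ok_ex V E {} f4 g'" using fix_vertex[OF sg ok3 inV(6) d4(4)] by blast
  then have "total_colorable V E 9" by (auto simp: ok_ex_empty total_colorable_def)
  then show False using ntc by simp
qed

end
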